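(* For each $\varepsilon>0$, $X_\infty\setminus Y_\infty\subset Z(\varepsilon)$, where $$X_\infty=\Big\{x:\liminf_{n\to\infty}\frac1n\sum_{i=1}^n\log_2d(T^ix,x)=-\infty\Big\},\quad Y_\infty=\Big\{x:\liminf_{n\to\infty}\frac1n\log_2d(T^nx,x)=-\infty\Big\},$$ $$Z(\varepsilon)=\bigcap_{N=1}^\infty\bigcup_{n=N}^\infty\bigcup_{m=1}^\infty\bigcup_{(\mathbf i,\mathbf j)\in\mathcal F^{n,m}(\varepsilon)}\widehat Q_{\mathbf i}^{\mathbf j}.$$
   Context: $\mathbb T=\mathbb R/\mathbb Z$, $Tx=2x\bmod1$, $d$ the usual distance on $\mathbb T$, $\log_20=-\infty$. $\mathcal D_n$ is the set of dyadic intervals $[m/2^n,(m+1)/2^n)$. For $i,j\ge1$, $Q_i^j=\{x:d(T^ix,x)\le2^{-j}\}$ and $\widehat Q_i^j$ is the union of intervals in $\mathcal D_{i+j}$ meeting $Q_i^j$; for $\mathbf i=(i_1,\dots,i_k)$, $\mathbf j=(j_1,\dots,j_k)$, $\widehat Q_{\mathbf i}^{\mathbf j}=\bigcap_{\nu=1}^k\widehat Q_{i_\nu}^{j_\nu}$. $\mathcal F_k(\varepsilon)$ is the set of $(i_1\cdots i_k;j_1\cdots j_k)$ of positive integers, $i_1<\dots<i_k$, with (i) $i_{l+1}-i_l\ge j_l$ for $1\le l<k$, (ii) $k\le\varepsilon i_k$, (iii) $i_k-\sum_{1\le l<k}j_l\le\varepsilon i_k$; $\mathcal F^{n,m}(\varepsilon)=\bigcup_{k=1}^n\{$elements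 of $\mathcal F_k(\varepsilon)$ with $i_k=n$, $j_k=m\}$. *)

theory Defs
  imports "HOL-Analysis.Analysis"
begin

text \<open>The circle T = R/Z is represented by the fundamental domain [0,1).\<close>

definition torus :: "real set" where
  "torus = {0..<1}"

definition dbl :: "real \<Rightarrow> real" where
  "dbl x = frac (2 * x)"

definition tdist :: "real \<Rightarrow> real \<Rightarrow> real" where
  "tdist x y = min (frac (x - y)) (1 - frac (x - y))"

definition elog2 :: "real \<Rightarrow> ereal" where
  "elog2 r = (if r = 0 then -\<infinity> else ereal (log 2 r))"

definition X_inf :: "real set" where
  "X_inf = {x \<in> torus.
     liminf (\<lambda>n::nat. ereal (1 / real n) * (\<Sum>i=1..n. elog2 (tdist ((dbl ^^ i) x) x))) = -\<infinity>}"

definition Y_inf :: "real set" where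
  "Y_inf = {x \<in> torus.
     liminf (\<lambda>n::nat. ereal (1 / real n) * elog2 (tdist ((dbl ^^ n) x) x)) = -\<infinity>}"

definition dyadic :: "nat \<Rightarrow> nat \<Rightarrow> real set" where
  "dyadic n m = {real m / 2 ^ n ..< (real m + 1) / 2 ^ n}"

definition Q :: "nat \<Rightarrow> nat \<Rightarrow> real set" where
  "Q i j = {x \<in> torus. tdist ((dbl ^^ i) x) x \<le> 1 / 2 ^ j}"

definition Qhat :: "nat \<Rightarrow> nat \<Rightarrow> real set" where
  "Qhat i j = \<Union> {dyadic (i + j) m | m. m < 2 ^ (i + j) \<and> dyadic (i + j) m \<inter> Q i j \<noteq> {}}"

text \<open>Multi-index version; the tuples (i_1..i_k) and (j_1..j_k) are lists of equal length k.\<close>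
definition Qhat_multi :: "nat list \<Rightarrow> nat list \<Rightarrow> real set" where
  "Qhat_multi is js = torus \<inter> (\<Inter>\<nu>\<in>{..<length is}. Qhat (is ! \<nu>) (js ! \<nu>))"

text \<open>F_k(eps), with 0-based list indices: position l corresponds to index l+1 of the paper.\<close>
definition F :: "nat \<Rightarrow> real \<Rightarrow> (nat list \<times> nat list) set" where
  "F k eps = {(is, js). length is = k \<and> length js = k \<and> k \<ge> 1 \<and>
     (\<forall>l<k. is ! l \<ge> 1 \<and> js ! l \<ge> 1) \<and>
     (\<forall>l. l + 1 < k \<longrightarrow> is ! l < is ! (l + 1)) \<and>
     (\<forall>l. l + 1 < k \<longrightarrow> is ! (l + 1) - is ! l \<ge> js ! l) \<and>
     real k \<le> eps * real (is ! (k - 1)) \<and>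
     real (is ! (k - 1)) - real (\<Sum>l<k - 1. js ! l) \<le> eps * real (is ! (k - 1))}"

definition Fnm :: "nat \<Rightarrow> nat \<Rightarrow> real \<Rightarrow> (nat list \<times> nat list) set" where
  "Fnm n m eps = (\<Union>k\<in>{1..n}. {(is, js) \<in> F k eps. is ! (k - 1) = n \<and> js ! (k - 1) = m})"

definition Z :: "real \<Rightarrow> real set" where
  "Z eps = (\<Inter>N\<in>{1..}. \<Union>n\<in>{N..}. \<Union>m\<in>{1..}. \<Union>(is, js)\<in>Fnm n m eps. Qhat_multi is js)"

end

theory Submission
  imports Defs
begin


locale chs =
  fixes e :: "nat \<Rightarrow> real" and C q N :: nat
  assumes e_nonneg: "\<And>t. 0 \<le> e t"
    and e_half: "\<And>t. e t \<le> 1/2"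
    and eK: "\<And>i s. \<bar>e (i+s) - e s\<bar> \<le> 2^s * e i"
    and lowb: "\<And>w. 1 \<le> w \<Longrightarrow> 1 / 2^(C*w) \<le> e w"
    and q_pos: "1 \<le> q"
begin

definition cov :: "nat \<Rightarrow> nat \<Rightarrow> bool" where
  "cov t u \<longleftrightarrow> e t \<le> 1 / 2^(u - t)"

definition f :: "nat \<Rightarrow> nat" where "f u = (LEAST t. 1 \<le> t \<and> cov t u)"

lemma cov_triv: "u \<le> t + 1 \<Longrightarrow> cov t u"
proof -
  assume "u \<le> t + 1"
  then have "u - t = 0 \<or> u - t = 1" by arith
  then show ?thesis using e_half[of t] unfolding cov_def by auto
qed

lemma cov_mono: "cov t u \<Longrightarrow> u' \<le> u \<Longrightarrow> cov t u'"
proof -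
  assume a: "cov t u" "u' \<le> u"
  have "(2::real)^(u'-t) \<le> 2^(u-t)" by (rule power_increasing) (use a in auto)
  then have "1 / (2::real)^(u-t) \<le> 1/2^(u'-t)" by (simp add: frac_le)
  then show ?thesis using a unfolding cov_def by linarith
qed

lemma f_ex: "1 \<le> max 1 (u-1) \<and> cov (max 1 (u-1)) u"
  by (auto intro: cov_triv)

lemma f_ge1: "1 \<le> f u" and f_cov: "cov (f u) u"
  using LeastI[of "\<lambda>t. 1 \<le> t \<and> cov t u", OF f_ex] unfolding f_def by auto

lemma f_le: "1 \<le> t \<Longrightarrow> cov t u \<Longrightarrow> f u \<le> t"
  unfolding f_def by (rule Least_le) simp

lemma f_le_max: "f u \<le> max 1 (u-1)"
  using f_le f_ex by blast

lemma f_less: "2 \<le> u \<Longrightarrow> f u < u"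
  using f_le_max[of u] by auto

lemma f_le_self: "1 \<le> u \<Longrightarrow> f u \<le> u"
  using f_le_max[of u] by auto

lemma copy:
  assumes "T < t" "t \<le> u" "cov T u" "cov t u"
  shows "cov (t - T) (u - T - 1)"
proof (cases "u - t \<le> 1")
  case True
  then show ?thesis by (intro cov_triv) arith
next
  case False
  have k: "e (t - T) \<le> e t + 2^(t-T) * e T"
    using eK[of T "t - T"] assms(1) by (simp add: abs_le_iff)
  have et: "e t \<le> 1/2^(u-t)" using assms(4) unfolding cov_def .
  have eT: "e T \<le> 1/2^(u-T)" using assms(3) unfolding cov_def .
  have p: "(2::real)^(u-T) = 2^(t-T) * 2^(u-t)"
    using assms(1,2) by (simp add: power_add[symmetric])
  have "2^(t-T) * e T \<le> 2^(t-T) * (1/2^(u-T))"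
    using eT by (intro mult_left_mono) auto
  also have "\<dots> = 1/2^(u-t)" using p by simp
  finally have "e (t - T) \<le> 2 / 2^(u-t)" using k et by simp
  also have "(2::real) / 2^(u-t) = 1 / 2^(u-t-1)"
  proof -
    have "u - t = Suc (u - t - 1)" using False by arith
    then have "(2::real)^(u-t) = 2 * 2^(u-t-1)" by (metis power_Suc)
    then show ?thesis by simp
  qed
  also have "u - t - 1 = (u - T - 1) - (t - T)" using assms(1,2) by arith
  finally show ?thesis unfolding cov_def .
qed

lemma cross:
  assumes "1 \<le> w" "m = t + w" "m \<le> u" "u \<le> n'" "cov m n'" "cov t u"
  shows "cov w (w + (u - m) - 1)"
proof (cases "u - m \<le> 1")
  case True
  then show ?thesis by (intro cov_triv) arith
next
  case False
  define v where "v = u - m"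
  have k: "e w \<le> e m + 2^w * e t"
    using eK[of t w] assms(2) by (simp add: abs_le_iff)
  have em: "e m \<le> 1/2^(n'-m)" using assms(5) unfolding cov_def .
  have et: "e t \<le> 1/2^(u-t)" using assms(6) unfolding cov_def .
  have p: "(2::real)^(u-t) = 2^w * 2^v"
    using assms(2,3) unfolding v_def by (simp add: power_add[symmetric])
  have "2^w * e t \<le> 2^w * (1/2^(u-t))"
    using et by (intro mult_left_mono) auto
  also have "\<dots> = 1/2^v" using p by simp
  finally have a1: "2^w * e t \<le> 1/2^v" .
  have "(2::real)^v \<le> 2^(n'-m)" by (rule power_increasing) (use assms in \<open>auto simp: v_def\<close>)
  then have "1/(2::real)^(n'-m) \<le> 1/2^v" by (simp add: frac_le)
  then have a2: "e m \<le> 1/2^v" using em by linarith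
  have "e w \<le> 2/2^v" using k a1 a2 by simp
  also have "(2::real) / 2^v = 1 / 2^(v-1)"
  proof -
    have "v = Suc (v - 1)" using False unfolding v_def by arith
    then have "(2::real)^v = 2 * 2^(v-1)" by (metis power_Suc)
    then show ?thesis by simp
  qed
  also have "v - 1 = (w + (u - m) - 1) - w" unfolding v_def using False by arith
  finally show ?thesis unfolding cov_def .
qed

lemma bound:
  assumes "1 \<le> w" "cov w (w + j)" shows "j \<le> C * w"
proof -
  have "1 / 2^(C*w) \<le> (1::real) / 2^j" using lowb[OF assms(1)] assms(2) unfolding cov_def by simp
  then have "(2::real)^j \<le> 2^(C*w)" by (simp add: frac_le field_simps)
  then show ?thesis by simp
qed

definition c :: "nat \<Rightarrow> nat" where "c u = card {t. 1 \<le> t \<and> t < u \<and> cov t u}"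
definition W :: "nat \<Rightarrow> nat" where "W n = (\<Sum>u\<le>n. c u)"
definition Bd :: "nat \<Rightarrow> nat set" where "Bd m = {w. 1 \<le> w \<and> w < m \<and> cov (m - w) m}"
definition Sig :: "nat \<Rightarrow> nat" where "Sig m = (\<Sum>w\<in>Bd m. C*w + 1)"

lemma c_le: "c u \<le> u"
proof -
  have "{t. 1 \<le> t \<and> t < u \<and> cov t u} \<subseteq> {1..<u}" by auto
  then have "c u \<le> card {1..<u}" unfolding c_def by (intro card_mono) auto
  then show ?thesis by simp
qed

lemma c0: "c 0 = 0" unfolding c_def by simp

lemma W_mono: "a \<le> b \<Longrightarrow> W a \<le> W b"
  unfolding W_def by (intro sum_mono2) auto

lemma W_le: "W n \<le> (n+1) * n"
proof -
  have "W n \<le> (\<Sum>u\<le>n. n)" unfolding W_def by (intro sum_mono) (use c_le order_trans in \<open>auto\<close>)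
  then show ?thesis by simp
qed

lemma Bd_sub: "Bd m \<subseteq> {1..<m}" unfolding Bd_def by auto
lemma Bd_fin: "finite (Bd m)" using Bd_sub finite_subset by blast
lemma card_Bd: "card (Bd m) \<le> m"
  using card_mono[OF _ Bd_sub, of m] by simp

lemma step:
  assumes n2: "2 \<le> n"
  shows "W n \<le> W (f n) + W (n - f n) + 2*(n - f n) + Sig (f n)"
proof -
  define T where "T = f n"
  have T1: "1 \<le> T" unfolding T_def by (rule f_ge1)
  have Tn: "T < n" unfolding T_def using f_less n2 by blast
  have covT: "cov T n" unfolding T_def by (rule f_cov)
  define A where "A u = {t. 1 \<le> t \<and> t < T \<and> cov t u}" for u
  have split: "W n = W T + (\<Sum>u\<in>{T<..n}. c u)"
  proof -
    have eq: "{..n} = {..T} \<union> {T<..n}" using Tn by auto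
    have d: "{..T} \<inter> {T<..n} = {}" by auto
    show ?thesis unfolding W_def
      by (simp only: eq sum.union_disjoint[OF finite_atMost finite_greaterThanAtMost d])
  qed
  have cu: "c u \<le> card (A u) + 2 + c (u - T - 1)" if u: "u \<in> {T<..n}" for u
  proof -
    define v where "v = u - T - 1"
    have covTu: "cov T u" using covT cov_mono u by auto
    have sub: "{t. 1 \<le> t \<and> t < u \<and> cov t u} \<subseteq>
       A u \<union> {T} \<union> (\<lambda>s. s + T) ` ({s. 1 \<le> s \<and> s < v \<and> cov s v} \<union> {v})"
    proof
      fix t assume t: "t \<in> {t. 1 \<le> t \<and> t < u \<and> cov t u}"
      show "t \<in> A u \<union> {T} \<union> (\<lambda>s. s + T) ` ({s. 1 \<le> s \<and> s < v \<and> cov s v} \<union> {v})"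
      proof (cases "t < T")
        case True then show ?thesis using t unfolding A_def by auto
      next
        case False
        show ?thesis
        proof (cases "t = T")
          case True then show ?thesis by auto
        next
          case False2: False
          with False have Tt: "T < t" by simp
          have cv: "cov (t - T) v" unfolding v_def using copy[OF Tt _ covTu] t by auto
          have "t - T \<le> v" using t Tt unfolding v_def by auto
          then have "t - T \<in> {s. 1 \<le> s \<and> s < v \<and> cov s v} \<union> {v}" using cv Tt by auto
          moreover have "t = (t - T) + T" using Tt by simp
          ultimately show ?thesis by blast
        qed
      qed
    qed
    have fA: "finite (A u)" unfolding A_def by auto
    have "c u \<le> card (A u \<union> {T} \<union> (\<lambda>s. s + T) ` ({s. 1 \<le> s \<and> s < v \<and> cov s v} \<union> {v}))"
      unfolding c_def by (intro card_mono sub) (use fA in auto)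
    also have "\<dots> \<le> card (A u) + card {T} + card ((\<lambda>s. s + T) ` ({s. 1 \<le> s \<and> s < v \<and> cov s v} \<union> {v}))"
      by (meson card_Un_le le_trans add_le_mono order_refl)
    also have "card ((\<lambda>s. s + T) ` ({s. 1 \<le> s \<and> s < v \<and> cov s v} \<union> {v})) \<le> card ({s. 1 \<le> s \<and> s < v \<and> cov s v} \<union> {v})"
      by (rule card_image_le) auto
    also have "\<dots> \<le> card {s. 1 \<le> s \<and> s < v \<and> cov s v} + card {v}"
      by (rule card_Un_le)
    finally show ?thesis unfolding v_def c_def by simp
  qed
  have sumA: "(\<Sum>u\<in>{T<..n}. card (A u)) \<le> Sig T"
  proof -
    have "(\<Sum>u\<in>{T<..n}. card (A u)) = card (SIGMA u:{T<..n}. A u)"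
      by (rule card_SigmaI[symmetric]) (auto simp: A_def)
    also have "\<dots> \<le> card (SIGMA w:Bd T. {1..C*w+1})"
    proof (rule card_inj_on_le[where f = "\<lambda>(u,t). (T - t, u - T)"])
      show "inj_on (\<lambda>(u,t). (T - t, u - T)) (SIGMA u:{T<..n}. A u)"
        by (auto simp: inj_on_def A_def)
      show "finite (SIGMA w:Bd T. {1..C*w+1})" using Bd_fin by auto
      show "(\<lambda>(u,t). (T - t, u - T)) ` (SIGMA u:{T<..n}. A u) \<subseteq> (SIGMA w:Bd T. {1..C*w+1})"
      proof
        fix p assume "p \<in> (\<lambda>(u,t). (T - t, u - T)) ` (SIGMA u:{T<..n}. A u)"
        then obtain u t where p: "p = (T - t, u - T)" and u: "T < u" "u \<le> n"
          and t: "1 \<le> t" "t < T" "cov t u" unfolding A_def by auto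
        have "cov t T" using t(3) cov_mono u by auto
        then have bd: "T - t \<in> Bd T" using t unfolding Bd_def by auto
        have "cov (T - t) ((T - t) + (u - T) - 1)"
          by (rule cross[of "T - t" T t u n]) (use t u covT in auto)
        moreover have "(T - t) + (u - T) - 1 = (T - t) + (u - T - 1)" using u by arith
        ultimately have "cov (T - t) ((T - t) + (u - T - 1))" by simp
        then have "u - T - 1 \<le> C * (T - t)" using bound t by auto
        then show "p \<in> (SIGMA w:Bd T. {1..C*w+1})" using p bd u by auto
      qed
    qed
    also have "\<dots> = (\<Sum>w\<in>Bd T. C*w + 1)"
      by (subst card_SigmaI) (auto simp: Bd_fin)
    finally show ?thesis unfolding Sig_def .
  qed
  have sumc: "(\<Sum>u\<in>{T<..n}. c (u - T - 1)) \<le> W (n - T)"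
  proof -
    have "(\<Sum>u\<in>{T<..n}. c (u - T - 1)) = (\<Sum>v\<in>{..<n-T}. c v)"
      by (rule sum.reindex_bij_witness[of _ "\<lambda>v. v + T + 1" "\<lambda>u. u - T - 1"]) auto
    also have "\<dots> \<le> (\<Sum>v\<le>n-T. c v)" by (intro sum_mono2) auto
    finally show ?thesis unfolding W_def .
  qed
  have "(\<Sum>u\<in>{T<..n}. c u) \<le> (\<Sum>u\<in>{T<..n}. card (A u) + 2 + c (u - T - 1))"
    by (intro sum_mono cu)
  also have "\<dots> = (\<Sum>u\<in>{T<..n}. card (A u)) + (\<Sum>u\<in>{T<..n}. 2) + (\<Sum>u\<in>{T<..n}. c (u - T - 1))"
    by (simp only: sum.distrib)
  also have "(\<Sum>u\<in>{T<..n}. (2::nat)) = 2 * (n - T)" by simp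
  finally have "(\<Sum>u\<in>{T<..n}. c u) \<le> Sig T + 2 * (n - T) + W (n - T)"
    using sumA sumc by linarith
  then show ?thesis using split unfolding T_def by linarith
qed

lemma Bd_rec:
  assumes m2: "2 \<le> m"
  shows "Bd m \<subseteq> {1, m - f m} \<union> Suc ` Bd (m - f m - 1)"
proof
  fix w assume w: "w \<in> Bd m"
  define T where "T = f m"
  have Tm: "T < m" unfolding T_def using f_less m2 by blast
  have covT: "cov T m" unfolding T_def by (rule f_cov)
  have w1: "1 \<le> w" "w < m" "cov (m - w) m" using w unfolding Bd_def by auto
  have "T \<le> m - w" unfolding T_def using f_le w1 by auto
  then have wle: "w \<le> m - T" using w1 by arith
  show "w \<in> {1, m - f m} \<union> Suc ` Bd (m - f m - 1)"
  proof (cases "w = 1 \<or> w = m - T")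
    case True then show ?thesis unfolding T_def by auto
  next
    case False
    then have w2: "2 \<le> w" "w < m - T" using w1 wle by auto
    have "cov ((m - w) - T) (m - T - 1)"
      by (rule copy) (use w2 w1 covT in auto)
    moreover have "(m - w) - T = (m - T - 1) - (w - 1)" using w2 by arith
    ultimately have "w - 1 \<in> Bd (m - T - 1)" unfolding Bd_def using w2 by auto
    moreover have "w = Suc (w - 1)" using w2 by simp
    ultimately show ?thesis unfolding T_def by blast
  qed
qed

lemma Sig_rec:
  assumes m2: "2 \<le> m"
  shows "Sig m \<le> Sig (m - f m - 1) + 2*C*(m - f m) + 2"
proof -
  define h where "h = m - f m"
  have h1: "1 \<le> h" unfolding h_def using f_less m2 by (simp add: Suc_leI)
  define g where "g w = C*w + 1" for w
  have "Sig m \<le> sum g ({1, h} \<union> Suc ` Bd (h - 1))"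
    unfolding Sig_def g_def h_def by (intro sum_mono2 Bd_rec m2) (auto simp: Bd_fin)
  also have "\<dots> \<le> sum g {1, h} + sum g (Suc ` Bd (h - 1))"
  proof -
    define A1 where "A1 = {1, h}"
    define B1 where "B1 = Suc ` Bd (h - 1)"
    have "sum g (A1 \<union> B1) + sum g (A1 \<inter> B1) = sum g A1 + sum g B1"
      by (rule sum.union_inter) (simp_all add: A1_def B1_def Bd_fin)
    then show ?thesis unfolding A1_def B1_def by linarith
  qed
  also have "sum g {1, h} \<le> g 1 + g h"
    by (cases "h = 1") (auto simp: g_def)
  also have "sum g (Suc ` Bd (h - 1)) = (\<Sum>w\<in>Bd (h-1). g (Suc w))"
    by (subst sum.reindex) auto
  also have "\<dots> = (\<Sum>w\<in>Bd (h-1). g w + C)" by (simp add: g_def algebra_simps)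
  also have "\<dots> = (\<Sum>w\<in>Bd (h-1). g w) + (\<Sum>w\<in>Bd (h-1). C)" by (rule sum.distrib)
  also have "\<dots> = Sig (h - 1) + C * card (Bd (h-1))"
    unfolding Sig_def g_def by simp
  also have "C * card (Bd (h-1)) \<le> C * (h - 1)" using card_Bd by simp
  finally have "Sig m \<le> g 1 + g h + (Sig (h - 1) + C * (h - 1))" by linarith
  also have "\<dots> = Sig (h - 1) + 2*C*h + 2"
  proof -
    have e1: "C*(h-1) + C = C*h" using h1 by (cases h) (auto simp: algebra_simps)
    have e2: "g 1 = C + 1" "g h = C*h + 1" unfolding g_def by auto
    show ?thesis using e1 e2 by linarith
  qed
  finally show ?thesis unfolding h_def .
qed

lemma Sig_le: "Sig m \<le> card (Bd m) * (C*m + 1)"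
proof -
  have "Sig m \<le> (\<Sum>w\<in>Bd m. C*m + 1)" unfolding Sig_def
  proof (intro sum_mono)
    fix w assume "w \<in> Bd m"
    then have "w < m" unfolding Bd_def by auto
    then show "C*w + 1 \<le> C*m + 1" by simp
  qed
  then show ?thesis by simp
qed

lemma f_fun_ge1: "1 \<le> n \<Longrightarrow> 1 \<le> (f ^^ r) n"
proof (induction r)
  case 0 then show ?case by simp
next
  case (Suc r) show ?case using f_ge1[of "(f^^r) n"] by simp
qed

lemma f_fun_mono: "1 \<le> n \<Longrightarrow> (f ^^ Suc r) n \<le> (f ^^ r) n"
  using f_le_self[OF f_fun_ge1] by simp

lemma f_fun_le: "(f ^^ r) n \<le> max 1 (n - r)"
proof (induction r)
  case 0 then show ?case by simp
next
  case (Suc r)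
  have "(f ^^ Suc r) n = f ((f ^^ r) n)" by simp
  also have "\<dots> \<le> max 1 ((f ^^ r) n - 1)" by (rule f_le_max)
  also have "\<dots> \<le> max 1 (n - Suc r)" using Suc by auto
  finally show ?case .
qed

lemma tele: "(\<And>r. r < R \<Longrightarrow> a (Suc r) \<le> (a r::nat)) \<Longrightarrow> (\<Sum>r<R. a r - a (Suc r)) = a 0 - a R"
proof (induction R)
  case 0 then show ?case by simp
next
  case (Suc R)
  have m: "a R \<le> a 0"
  proof -
    have "\<forall>j\<le>R. a j \<le> a 0"
    proof (intro allI impI)
      fix j assume "j \<le> R" then show "a j \<le> a 0"
      proof (induction j)
        case 0 then show ?case by simp
      next
        case (Suc j) then show ?case using Suc.prems \<open>\<And>r. r < Suc R \<Longrightarrow> a (Suc r) \<le> a r\<close>[of j] by simp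
      qed
    qed
    then show ?thesis by simp
  qed
  have "(\<Sum>r<Suc R. a r - a (Suc r)) = (a 0 - a R) + (a R - a (Suc R))"
    using Suc by simp
  also have "\<dots> = a 0 - a (Suc R)" using m Suc.prems[of R] by simp
  finally show ?case .
qed

lemma pow2_eq: "(2::real) powr (- real k) = 1 / 2^k"
  by (simp add: powr_minus_divide powr_realpow)

lemma e_pos: "1 \<le> i \<Longrightarrow> 0 < e i"
proof -
  assume "1 \<le> i"
  then have "1 / 2^(C*i) \<le> e i" by (rule lowb)
  moreover have "(0::real) < 1 / 2^(C*i)" by simp
  ultimately show ?thesis by linarith
qed

lemma sum_log_le: "(\<Sum>i=1..n. - log 2 (e i)) \<le> real n + real (W ((C+1)*n))"
proof -
  define M where "M = (C+1)*n"
  define A where "A i = {u. i < u \<and> u \<le> M \<and> cov i u}" for i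
  have per: "- log 2 (e i) \<le> 1 + real (card (A i))" if i: "i \<in> {1..n}" for i
  proof -
    have i1: "1 \<le> i" "i \<le> n" using i by auto
    have ep: "0 < e i" using e_pos i1 by simp
    define a where "a = - log 2 (e i)"
    have pe: "(2::real) powr (- real (C*i)) = 1 / 2^(C*i)" by (rule pow2_eq)
    have "(2::real) powr (- real (C*i)) \<le> e i" using lowb[OF i1(1)] pe by linarith
    then have "- real (C*i) \<le> log 2 (e i)" using le_log_iff[of 2 "e i"] ep by simp
    then have aC: "a \<le> real (C*i)" unfolding a_def by simp
    have "log 2 (e i) \<le> log 2 1" using ep e_half[of i] by (subst log_le_cancel_iff) auto
    then have a0: "0 \<le> a" unfolding a_def by simp
    define J where "J = nat \<lfloor>a\<rfloor>"
    have J1: "real J \<le> a" unfolding J_def using a0 by linarith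
    have J2: "a < real J + 1" unfolding J_def using a0 by linarith
    have JC: "J \<le> C*i" using J1 aC by linarith
    have sub: "{i+1..i+J} \<subseteq> A i"
    proof
      fix u assume u: "u \<in> {i+1..i+J}"
      have "log 2 (e i) \<le> - real (u - i)" using u J1 unfolding a_def by auto
      then have "e i \<le> 2 powr (- real (u - i))" using log_le_iff[of 2 "e i"] ep by simp
      moreover have "(2::real) powr (- real (u - i)) = 1 / 2^(u-i)" by (rule pow2_eq)
      ultimately have cv: "cov i u" unfolding cov_def by linarith
      have "u \<le> M" using u JC i1 unfolding M_def
        by (auto simp: algebra_simps intro: order_trans[OF _ add_le_mono[OF i1(2) mult_le_mono2[OF i1(2)]]])
      then show "u \<in> A i" using u cv unfolding A_def by auto
    qed
    have "J \<le> card (A i)" using card_mono[OF _ sub] unfolding A_def by simp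
    then show ?thesis using J2 unfolding a_def by linarith
  qed
  have "(\<Sum>i=1..n. - log 2 (e i)) \<le> (\<Sum>i=1..n. 1 + real (card (A i)))"
    by (intro sum_mono per)
  also have "\<dots> = real n + real (\<Sum>i=1..n. card (A i))" by (simp add: sum.distrib)
  also have "(\<Sum>i=1..n. card (A i)) = card (SIGMA i:{1..n}. A i)"
    by (rule card_SigmaI[symmetric]) (auto simp: A_def)
  also have "\<dots> \<le> card (SIGMA u:{..M}. {t. 1 \<le> t \<and> t < u \<and> cov t u})"
  proof (rule card_inj_on_le[where f = "\<lambda>(i,u). (u,i)"])
    show "inj_on (\<lambda>(i,u). (u,i)) (SIGMA i:{1..n}. A i)" by (auto simp: inj_on_def)
    show "(\<lambda>(i,u). (u,i)) ` (SIGMA i:{1..n}. A i) \<subseteq> (SIGMA u:{..M}. {t. 1 \<le> t \<and> t < u \<and> cov t u})"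
      by (auto simp: A_def)
    show "finite (SIGMA u:{..M}. {t. 1 \<le> t \<and> t < u \<and> cov t u})" by auto
  qed
  also have "\<dots> = W M" unfolding W_def c_def by (subst card_SigmaI) auto
  finally show ?thesis unfolding M_def by simp
qed

lemma Q_sub_Qhat: assumes "x \<in> Q i j" shows "x \<in> Qhat i j"
proof -
  have x: "0 \<le> x" "x < 1" using assms unfolding Q_def torus_def by auto
  define k where "k = i + j"
  define m where "m = nat \<lfloor>x * 2^k\<rfloor>"
  have p: "(0::real) < 2^k" by simp
  have fl0: "0 \<le> \<lfloor>x * 2^k\<rfloor>" using x by simp
  have rm: "real m = of_int \<lfloor>x * 2^k\<rfloor>" unfolding m_def using fl0 by simp
  have "real m \<le> x * 2^k" using rm by linarith
  then have l: "real m / 2^k \<le> x" using p by (simp add: divide_le_eq)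
  have "x * 2^k < real m + 1" using rm by linarith
  then have r: "x < (real m + 1) / 2^k" using p by (simp add: less_divide_eq)
  have "x * 2^k < 2^k" using x p by simp
  then have "real m < 2^k" using rm by linarith
  then have mk: "m < 2^k" by (metis of_nat_less_iff of_nat_numeral of_nat_power)
  have xd: "x \<in> dyadic k m" unfolding dyadic_def using l r by simp
  show ?thesis unfolding Qhat_def k_def[symmetric] using xd mk assms by blast
qed

lemma chain_mem:
  assumes x: "x \<in> torus" and ex: "\<And>t. e t = tdist ((dbl^^t) x) x" and qe: "1 / real q \<le> eps"
    and n1: "1 \<le> n" and g2: "\<forall>r<R. 2 \<le> (f^^r) n" and hR: "q * (f^^R) n \<le> n" and hk: "q * (R+1) \<le> n"
  shows "\<exists>p \<in> Fnm n 1 eps. x \<in> Qhat_multi (fst p) (snd p)"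
proof -
  define g where "g r = (f ^^ r) n" for r
  have g0: "g 0 = n" unfolding g_def by simp
  have gS: "g (Suc r) = f (g r)" for r unfolding g_def by simp
  have glt: "g (Suc r) < g r" if "r < R" for r using f_less g2 that unfolding gS g_def by auto
  have gmono: "g (Suc r) \<le> g r" for r unfolding g_def using f_fun_mono n1 by blast
  have gle: "g r \<le> n" for r
  proof (induction r)
    case 0 then show ?case using g0 by simp
  next
    case (Suc r) then show ?case using gmono[of r] by simp
  qed
  define "is" where "is = map (\<lambda>l. g (R - l)) [0..<Suc R]"
  define js where "js = map (\<lambda>l. if l < R then g (R - l - 1) - g (R - l) else 1) [0..<Suc R]"
  have len: "length is = Suc R" "length js = Suc R" unfolding is_def js_def by simp_all
  have isn: "is ! l = g (R - l)" if "l < Suc R" for l unfolding is_def using that by (simp del: upt_Suc)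
  have jsn: "js ! l = (if l < R then g (R - l - 1) - g (R - l) else 1)" if "l < Suc R" for l
    unfolding js_def using that by (simp del: upt_Suc)
  have qpos: "(0::real) < real q" using q_pos by simp
  have nq: "real n / real q \<le> eps * real n"
  proof -
    have "real n / real q = (1 / real q) * real n" by simp
    also have "\<dots> \<le> eps * real n" using qe by (intro mult_right_mono) auto
    finally show ?thesis .
  qed
  have kle: "real (Suc R) \<le> eps * real n"
  proof -
    have "real (Suc R) * real q \<le> real n" using hk by (metis Suc_eq_plus1 mult.commute of_nat_le_iff of_nat_mult)
    then have "real (Suc R) \<le> real n / real q" using qpos by (simp add: le_divide_eq)
    then show ?thesis using nq by linarith
  qed
  have gRle: "real (g R) \<le> eps * real n"
  proof -
    have "real (g R) * real q \<le> real n" using hR unfolding g_def by (metis mult.commute of_nat_le_iff of_nat_mult)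
    then have "real (g R) \<le> real n / real q" using qpos by (simp add: le_divide_eq)
    then show ?thesis using nq by linarith
  qed
  have sumjs: "(\<Sum>l<R. js ! l) = n - g R"
  proof -
    have "(\<Sum>l<R. js ! l) = (\<Sum>l<R. g (R - Suc l) - g (Suc (R - Suc l)))"
    proof (rule sum.cong)
      fix l assume "l \<in> {..<R}"
      then have l: "l < R" by simp
      then have "Suc (R - Suc l) = R - l" by simp
      then show "js ! l = g (R - Suc l) - g (Suc (R - Suc l))" using jsn[of l] l by simp
    qed simp
    also have "\<dots> = (\<Sum>r<R. g r - g (Suc r))"
      by (rule sum.nat_diff_reindex[where g = "\<lambda>r. g r - g (Suc r)"])
    also have "\<dots> = g 0 - g R" by (rule tele) (use gmono in auto)
    finally show ?thesis using g0 by simp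
  qed
  have RN: "Suc R \<le> n" using hk q_pos by (metis Suc_eq_plus1 le_trans mult_le_mono1 mult_1)
  have inF: "(is, js) \<in> F (Suc R) eps"
    unfolding F_def
  proof (simp only: mem_Collect_eq case_prod_conv, intro conjI)
    show "length is = Suc R" "length js = Suc R" by (simp_all add: len)
    show "1 \<le> Suc R" by simp
    show "\<forall>l<Suc R. 1 \<le> is ! l \<and> 1 \<le> js ! l"
    proof (intro allI impI conjI)
      fix l assume l: "l < Suc R"
      show "1 \<le> is ! l" using isn[OF l] g_def f_fun_ge1 n1 by simp
      show "1 \<le> js ! l"
      proof (cases "l < R")
        case True
        have "R - l = Suc (R - l - 1)" using True by simp
        then have "g (R - l) < g (R - l - 1)" using glt[of "R - l - 1"] True by simp
        then show ?thesis using jsn[OF l] True by simp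
      next
        case False then show ?thesis using jsn[OF l] by simp
      qed
    qed
    show "\<forall>l. l + 1 < Suc R \<longrightarrow> is ! l < is ! (l + 1)"
    proof (intro allI impI)
      fix l assume l: "l + 1 < Suc R"
      have "R - l = Suc (R - (l+1))" using l by simp
      then have "g (R - l) < g (R - (l+1))" using glt[of "R - (l+1)"] l by simp
      then show "is ! l < is ! (l + 1)" using isn l by simp
    qed
    show "\<forall>l. l + 1 < Suc R \<longrightarrow> js ! l \<le> is ! (l + 1) - is ! l"
    proof (intro allI impI)
      fix l assume l: "l + 1 < Suc R"
      have "R - (l+1) = R - l - 1" by simp
      then show "js ! l \<le> is ! (l + 1) - is ! l" using isn jsn l by simp
    qed
    show "real (Suc R) \<le> eps * real (is ! (Suc R - 1))" using kle isn[of R] g0 by simp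
    show "real (is ! (Suc R - 1)) - real (\<Sum>l<Suc R - 1. js ! l) \<le> eps * real (is ! (Suc R - 1))"
      using sumjs gRle isn[of R] g0 gle[of R] by (simp add: of_nat_diff)
  qed
  have inFnm: "(is, js) \<in> Fnm n 1 eps"
    unfolding Fnm_def using inF RN isn[of R] jsn[of R] g0 by auto
  have Qm: "x \<in> Qhat_multi is js"
    unfolding Qhat_multi_def
  proof (intro IntI INT_I)
    show "x \<in> torus" by (rule x)
    fix \<nu> assume "\<nu> \<in> {..<length is}"
    then have \<nu>: "\<nu> < Suc R" using len by simp
    show "x \<in> Qhat (is ! \<nu>) (js ! \<nu>)"
    proof (rule Q_sub_Qhat)
      show "x \<in> Q (is ! \<nu>) (js ! \<nu>)"
      proof (cases "\<nu> < R")
        case True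
        define u where "u = g (R - \<nu> - 1)"
        have "R - \<nu> = Suc (R - \<nu> - 1)" using True by simp
        then have gi: "g (R - \<nu>) = f u" unfolding u_def using gS by metis
        have "cov (f u) u" by (rule f_cov)
        then have "e (f u) \<le> 1 / 2^(u - f u)" unfolding cov_def .
        then show ?thesis unfolding Q_def using x isn[OF \<nu>] jsn[OF \<nu>] True gi ex u_def by simp
      next
        case False
        then have "\<nu> = R" using \<nu> by simp
        then show ?thesis unfolding Q_def using x isn[OF \<nu>] jsn[OF \<nu>] g0 ex e_half[of n] by simp
      qed
    qed
  qed
  show ?thesis using inFnm Qm by force
qed

end

locale chf = chs +
  assumes fail: "\<And>n R. N \<le> n \<Longrightarrow> (\<forall>r<R. 2 \<le> (f ^^ r) n) \<Longrightarrow> q * (f ^^ R) n \<le> n \<Longrightarrow> n < q * (R + 1)"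
begin

definition "N1 = max N (2*q)"
definition "D = 2*C*q + 2 + C*N1 + 1"

lemma f_big: assumes "N1 \<le> m" shows "m < q * f m"
proof (rule ccontr)
  assume "\<not> m < q * f m"
  then have a: "q * (f ^^ 1) m \<le> m" by simp
  have m2: "2 \<le> m" using assms q_pos unfolding N1_def by auto
  have "m < q * (1 + 1)" by (rule fail[OF _ _ a]) (use assms m2 in \<open>auto simp: N1_def\<close>)
  then show False using assms unfolding N1_def by auto
qed

lemma Sig_lin: "Sig m \<le> D * m"
proof (induction m rule: less_induct)
  case (less m)
  show ?case
  proof (cases "m < 2")
    case True
    then have "Bd m = {}" using Bd_sub[of m] by auto
    then show ?thesis unfolding Sig_def by simp
  next
    case False
    show ?thesis
    proof (cases "m < N1")
      case True
      have "Sig m \<le> card (Bd m) * (C*m + 1)" by (rule Sig_le)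
      also have "\<dots> \<le> m * (C*N1 + 1)" using card_Bd[of m] True
        by (intro mult_le_mono) auto
      also have "\<dots> \<le> D * m" unfolding D_def by (simp add: algebra_simps)
      finally show ?thesis .
    next
      case False2: False
      define g where "g = f m"
      define h where "h = m - g"
      have g1: "1 \<le> g" unfolding g_def by (rule f_ge1)
      have gm: "g < m" unfolding g_def using f_less \<open>\<not> m < 2\<close> by auto
      have h1: "1 \<le> h" unfolding h_def using gm by simp
      have big: "m < q * g" unfolding g_def using f_big False2 by simp
      have IH: "Sig (h - 1) \<le> D * (h - 1)" by (rule less.IH) (use gm g1 in \<open>auto simp: h_def\<close>)
      have rec: "Sig m \<le> Sig (h - 1) + 2*C*h + 2" unfolding h_def g_def
        using Sig_rec \<open>\<not> m < 2\<close> by simp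
      have hq: "h \<le> q * g" using big unfolding h_def by simp
      have "2*C*h \<le> 2*C*(q*g)" using hq by simp
      also have "\<dots> \<le> D * g" unfolding D_def by (simp add: algebra_simps)
      finally have a1: "2*C*h \<le> D*g" .
      have a2: "D*(h-1) + D = D*h" using h1 by (cases h) (auto simp: algebra_simps)
      have a3: "2 \<le> D" unfolding D_def by simp
      have a4: "D*m = D*h + D*g" unfolding h_def using gm by (simp add: algebra_simps diff_mult_distrib2)
      show ?thesis using rec IH a1 a2 a3 a4 by linarith
    qed
  qed
qed

lemma Sig_h: assumes "1 \<le> m" shows "Sig m \<le> (D + 2*C) * (m - f m) + 2"
proof (cases "m < 2")
  case True
  then have "Bd m = {}" using Bd_sub[of m] by auto
  then show ?thesis unfolding Sig_def by simp
next
  case False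
  define h where "h = m - f m"
  have h1: "1 \<le> h" unfolding h_def using f_less False by (simp add: Suc_leI)
  have "Sig m \<le> Sig (h - 1) + 2*C*h + 2" using Sig_rec False unfolding h_def by simp
  also have "Sig (h-1) \<le> D * (h - 1)" by (rule Sig_lin)
  also have "D * (h - 1) \<le> D * h" by simp
  finally show ?thesis unfolding h_def by (simp add: algebra_simps)
qed


definition "N2 = N1 + 4*q"
definition "X = D + 2*C + 4"
definition "K = 2*q + 4*q*X + N2"

lemma W_lin: "W n \<le> K * n"
proof (induction n rule: less_induct)
  case (less n)
  show ?case
  proof (cases "n < N2")
    case True
    have "W n \<le> (n+1)*n" by (rule W_le)
    also have "\<dots> \<le> K * n" using True unfolding K_def by (intro mult_le_mono) auto
    finally show ?thesis .
  next
    case False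
    have nN: "N \<le> n" "4*q \<le> n" "N1 \<le> n" using False unfolding N2_def N1_def by auto
    have n1: "1 \<le> n" and qn: "q < n" using nN q_pos by auto
    define g where "g r = (f ^^ r) n" for r
    have g0: "g 0 = n" unfolding g_def by simp
    have gS: "g (Suc r) = f (g r)" for r unfolding g_def by simp
    have g1: "1 \<le> g r" for r unfolding g_def using f_fun_ge1 n1 by blast
    have gmono: "g (Suc r) \<le> g r" for r unfolding g_def using f_fun_mono n1 by blast
    have ganti: "i \<le> j \<Longrightarrow> g j \<le> g i" for i j
    proof (induction j)
      case 0 then show ?case by simp
    next
      case (Suc j) then show ?case using gmono[of j] by (cases "i = Suc j") auto
    qed
    have gle: "g r \<le> n" for r using ganti[of 0 r] g0 by simp
    have exR: "q * g n \<le> n"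
    proof -
      have "g n \<le> 1" using f_fun_le[of n n] unfolding g_def by simp
      then have "q * g n \<le> q * 1" by (intro mult_le_mono) auto
      then show ?thesis using qn by linarith
    qed
    define R where "R = (LEAST R. q * g R \<le> n)"
    have hR: "q * g R \<le> n" unfolding R_def by (rule LeastI[of _ n]) (rule exR)
    have ltR: "n < q * g r" if "r < R" for r
      using not_less_Least[of r "\<lambda>R. q * g R \<le> n"] that unfolding R_def by simp
    have g2: "2 \<le> g r" if "r < R" for r
    proof (rule ccontr)
      assume "\<not> 2 \<le> g r"
      then have "g r \<le> 1" by simp
      then have "q * g r \<le> q * 1" by (intro mult_le_mono) auto
      then show False using ltR[OF that] qn by linarith
    qed
    have failR: "n < q * (R+1)" using fail[OF nN(1), of R] g2 hR unfolding g_def by auto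
    have R1: "1 \<le> R"
    proof (rule ccontr)
      assume "\<not> 1 \<le> R" then have "R = 0" by simp
      then show False using failR qn by simp
    qed
    have RleN: "R \<le> n" unfolding R_def by (rule Least_le) (rule exR)
    define \<delta> where "\<delta> r = g r - g (Suc r)" for r
    have \<delta>pos: "1 \<le> \<delta> r" if "r < R" for r
      using f_less[OF g2[OF that]] unfolding \<delta>_def gS by simp
    have \<delta>lt: "\<delta> r < n" for r using g1[of "Suc r"] gle[of r] n1 unfolding \<delta>_def by arith
    have sum\<delta>: "(\<Sum>r<R. \<delta> r) = n - g R"
      using tele[of R g] gmono g0 unfolding \<delta>_def by simp
    have sumh: "(\<Sum>r<R. g (Suc r) - g (Suc (Suc r))) = g 1 - g (Suc R)"
      using tele[of R "\<lambda>r. g (Suc r)"] gmono by simp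
    define \<Phi> where "\<Phi> r = W (\<delta> r) + 2 * \<delta> r + Sig (g (Suc r))" for r
    have chain: "j \<le> R \<Longrightarrow> W n \<le> W (g j) + (\<Sum>r<j. \<Phi> r)" for j
    proof (induction j)
      case 0 show ?case using g0 by simp
    next
      case (Suc j)
      have "W (g j) \<le> W (f (g j)) + W (g j - f (g j)) + 2*(g j - f (g j)) + Sig (f (g j))"
        by (rule step) (use g2 Suc.prems in auto)
      then have "W (g j) \<le> W (g (Suc j)) + \<Phi> j" unfolding \<Phi>_def \<delta>_def gS by simp
      with Suc.IH Suc.prems show ?case by simp
    qed
    have c1: "W n \<le> W (g R) + (\<Sum>r<R. \<Phi> r)" using chain by simp
    have gRn: "g R < n"
    proof -
      have "g R \<le> g 1" using ganti R1 by blast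
      also have "g 1 < g 0" using f_less[of n] nN q_pos gS[of 0] g0 by simp
      finally show ?thesis using g0 by simp
    qed
    have c2: "W (g R) \<le> K * g R" using less.IH gRn by blast
    define P where "P r \<longleftrightarrow> \<delta> r < 2*q" for r
    define S where "S = card {r \<in> {..<R}. P r}"
    define Bg where "Bg = card {r \<in> {..<R}. \<not> P r}"
    have Kq: "2*q \<le> K" unfolding K_def by simp
    have per: "W (\<delta> r) + (K - 2*q) * (if P r then 1 else 0) \<le> K * \<delta> r" if "r < R" for r
    proof (cases "P r")
      case True
      have "W (\<delta> r) \<le> (\<delta> r + 1) * \<delta> r" by (rule W_le)
      also have "\<dots> \<le> (2*q) * \<delta> r" using True unfolding P_def by (intro mult_le_mono) auto
      finally have a: "W (\<delta> r) \<le> (2*q) * \<delta> r" .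
      have b: "(K - 2*q) \<le> (K - 2*q) * \<delta> r" using mult_le_mono2[OF \<delta>pos[OF that], of "K - 2*q"] by simp
      have eq: "(2*q) * \<delta> r + (K - 2*q) * \<delta> r = K * \<delta> r" using Kq
        by (simp add: add_mult_distrib[symmetric])
      have "(K - 2*q) * (if P r then 1 else 0) = K - 2*q" using True by simp
      then show ?thesis using a b eq by linarith
    next
      case False
      have "W (\<delta> r) \<le> K * \<delta> r" using less.IH \<delta>lt by blast
      then show ?thesis using False by simp
    qed
    have sumind: "(\<Sum>r<R. (if P r then 1 else (0::nat))) = S"
      unfolding S_def by (simp add: sum.inter_filter[symmetric])
    have c3: "(\<Sum>r<R. W (\<delta> r)) + (K - 2*q) * S \<le> K * (\<Sum>r<R. \<delta> r)"
    proof -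
      have "(\<Sum>r<R. W (\<delta> r) + (K - 2*q) * (if P r then 1 else 0)) \<le> (\<Sum>r<R. K * \<delta> r)"
        by (intro sum_mono per) simp
      moreover have "(\<Sum>r<R. W (\<delta> r) + (K - 2*q) * (if P r then 1 else 0))
          = (\<Sum>r<R. W (\<delta> r)) + (K - 2*q) * (\<Sum>r<R. (if P r then 1 else 0))"
        by (simp add: sum.distrib sum_distrib_left)
      ultimately show ?thesis using sumind by (simp add: sum_distrib_left)
    qed
    have c4: "(\<Sum>r<R. Sig (g (Suc r))) \<le> (D + 2*C) * n + 2 * n"
    proof -
      have "(\<Sum>r<R. Sig (g (Suc r))) \<le> (\<Sum>r<R. (D + 2*C) * (g (Suc r) - g (Suc (Suc r))) + 2)"
      proof (intro sum_mono)
        fix r assume "r \<in> {..<R}"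
        show "Sig (g (Suc r)) \<le> (D + 2*C) * (g (Suc r) - g (Suc (Suc r))) + 2"
          using Sig_h[OF g1[of "Suc r"]] gS[of "Suc r"] by simp
      qed
      also have "\<dots> = (\<Sum>r<R. (D + 2*C) * (g (Suc r) - g (Suc (Suc r)))) + (\<Sum>r<R. 2)"
        by (rule sum.distrib)
      also have "\<dots> = (D + 2*C) * (\<Sum>r<R. g (Suc r) - g (Suc (Suc r))) + 2 * R"
        by (simp add: sum_distrib_left)
      also have "\<dots> = (D + 2*C) * (g 1 - g (Suc R)) + 2 * R"
        using sumh by simp
      also have "\<dots> \<le> (D + 2*C) * n + 2 * n"
        using gle[of 1] RleN by (intro add_mono mult_le_mono) auto
      finally show ?thesis .
    qed
    have c5: "Bg * (2*q) \<le> n"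
    proof -
      have "Bg * (2*q) = (\<Sum>r\<in>{r \<in> {..<R}. \<not> P r}. 2*q)" unfolding Bg_def by simp
      also have "\<dots> \<le> (\<Sum>r\<in>{r \<in> {..<R}. \<not> P r}. \<delta> r)"
        by (intro sum_mono) (auto simp: P_def)
      also have "\<dots> \<le> (\<Sum>r<R. \<delta> r)" by (intro sum_mono2) auto
      finally show ?thesis using sum\<delta> by simp
    qed
    have c6: "S + Bg = R"
    proof -
      have s2: "(\<Sum>r<R. (if \<not> P r then 1 else (0::nat))) = Bg"
        unfolding Bg_def by (simp add: sum.inter_filter[symmetric])
      have "(\<Sum>r<R. (if P r then 1 else (0::nat))) + (\<Sum>r<R. (if \<not> P r then 1 else (0::nat)))
          = (\<Sum>r<R. (1::nat))"
        unfolding sum.distrib[symmetric] by (rule sum.cong) auto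
      then show ?thesis using sumind s2 by simp
    qed
    have sum\<Phi>: "(\<Sum>r<R. \<Phi> r) = (\<Sum>r<R. W (\<delta> r)) + 2 * (\<Sum>r<R. \<delta> r) + (\<Sum>r<R. Sig (g (Suc r)))"
      unfolding \<Phi>_def by (simp add: sum.distrib sum_distrib_left)
    have main1: "W n + (K - 2*q) * S \<le> K * n + X * n"
    proof -
      have "K * g R + K * (n - g R) = K * n" using gle[of R]
        by (simp add: add_mult_distrib2[symmetric])
      moreover have "2 * (n - g R) \<le> 2 * n" by simp
      ultimately show ?thesis using c1 c2 c3 c4 sum\<Phi> sum\<delta> unfolding X_def
        by (simp add: algebra_simps)
    qed
    have main2: "n \<le> 4 * (q * S)"
    proof -
      have e1: "q * S + q * Bg = q * R" using c6 by (simp add: add_mult_distrib2[symmetric])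
      have e2: "2 * (q * Bg) \<le> n" using c5 by (simp add: algebra_simps)
      have e3: "n < q * R + q" using failR by (simp add: algebra_simps)
      show ?thesis using e1 e2 e3 nN(2) by linarith
    qed
    have main3: "X * n \<le> (K - 2*q) * S"
    proof -
      have "X * n \<le> X * (4 * (q * S))" using main2 by simp
      also have "\<dots> = (4*q*X) * S" by (simp add: algebra_simps)
      also have "\<dots> \<le> (K - 2*q) * S" unfolding K_def by (intro mult_le_mono) auto
      finally show ?thesis .
    qed
    show ?thesis using main1 main3 by linarith
  qed
qed

end



definition dZ :: "real \<Rightarrow> real" where "dZ r = min (frac r) (1 - frac r)"

lemma dZ_le_int: "dZ r \<le> \<bar>r - of_int k\<bar>"
proof -
  have fr: "frac r = r - of_int \<lfloor>r\<rfloor>" by (simp add: frac_def)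
  show ?thesis
  proof (cases "k \<le> \<lfloor>r\<rfloor>")
    case True
    then have "of_int k \<le> (of_int \<lfloor>r\<rfloor> :: real)" by simp
    then have "frac r \<le> \<bar>r - of_int k\<bar>" using fr of_int_floor_le[of r] by linarith
    then show ?thesis unfolding dZ_def by linarith
  next
    case False
    then have "of_int \<lfloor>r\<rfloor> + 1 \<le> (of_int k :: real)" by linarith
    then have "1 - frac r \<le> \<bar>r - of_int k\<bar>" using fr real_of_int_floor_add_one_gt[of r] by linarith
    then show ?thesis unfolding dZ_def by linarith
  qed
qed

lemma dZ_att: "\<exists>k. dZ r = \<bar>r - of_int k\<bar>"
proof -
  have fr: "frac r = r - of_int \<lfloor>r\<rfloor>" by (simp add: frac_def)
  have f0: "0 \<le> frac r" "frac r < 1" by (simp_all add: frac_lt_1)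
  show ?thesis
  proof (cases "frac r \<le> 1 - frac r")
    case True
    then have "dZ r = \<bar>r - of_int \<lfloor>r\<rfloor>\<bar>" unfolding dZ_def using fr f0 by auto
    then show ?thesis by blast
  next
    case False
    then have "dZ r = \<bar>r - of_int (\<lfloor>r\<rfloor> + 1)\<bar>" unfolding dZ_def using fr f0 by auto
    then show ?thesis by blast
  qed
qed

lemma dZ_nonneg: "0 \<le> dZ r"
  unfolding dZ_def using frac_ge_0[of r] frac_lt_1[of r] by simp

lemma dZ_half: "dZ r \<le> 1/2"
  unfolding dZ_def min_def by auto

lemma dZ_add: "dZ (r + s) \<le> dZ r + dZ s"
proof -
  obtain k1 where k1: "dZ r = \<bar>r - of_int k1\<bar>" using dZ_att by blast
  obtain k2 where k2: "dZ s = \<bar>s - of_int k2\<bar>" using dZ_att by blast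
  have "dZ (r + s) \<le> \<bar>r + s - of_int (k1 + k2)\<bar>" by (rule dZ_le_int)
  also have "\<dots> \<le> \<bar>r - of_int k1\<bar> + \<bar>s - of_int k2\<bar>" by simp
  finally show ?thesis using k1 k2 by simp
qed

lemma dZ_shift: "dZ (r + of_int k) = dZ r"
proof -
  obtain k1 where k1: "dZ r = \<bar>r - of_int k1\<bar>" using dZ_att by blast
  obtain k2 where k2: "dZ (r + of_int k) = \<bar>r + of_int k - of_int k2\<bar>" using dZ_att by blast
  have "dZ (r + of_int k) \<le> \<bar>r + of_int k - of_int (k1 + k)\<bar>" by (rule dZ_le_int)
  then have a: "dZ (r + of_int k) \<le> dZ r" using k1 by simp
  have "dZ r \<le> \<bar>r - of_int (k2 - k)\<bar>" by (rule dZ_le_int)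
  then have b: "dZ r \<le> dZ (r + of_int k)" using k2 by (simp add: algebra_simps)
  show ?thesis using a b by simp
qed

lemma dZ_neg: "dZ (- r) = dZ r"
proof -
  obtain k1 where k1: "dZ r = \<bar>r - of_int k1\<bar>" using dZ_att by blast
  obtain k2 where k2: "dZ (-r) = \<bar>-r - of_int k2\<bar>" using dZ_att by blast
  have "dZ (-r) \<le> \<bar>-r - of_int (-k1)\<bar>" by (rule dZ_le_int)
  then have a: "dZ (-r) \<le> dZ r" using k1 by simp
  have "dZ r \<le> \<bar>r - of_int (-k2)\<bar>" by (rule dZ_le_int)
  then have b: "dZ r \<le> dZ (-r)" using k2 by simp
  show ?thesis using a b by simp
qed

lemma dZ_double: "dZ (2 * r) \<le> 2 * dZ r"
proof -
  obtain k1 where k1: "dZ r = \<bar>r - of_int k1\<bar>" using dZ_att by blast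
  have e: "2*r - of_int (2*k1) = 2*(r - of_int k1)" by simp
  have "dZ (2*r) \<le> \<bar>2*(r - of_int k1)\<bar>" by (metis e dZ_le_int)
  then have "dZ (2*r) \<le> 2 * \<bar>r - of_int k1\<bar>" by (simp only: abs_mult abs_numeral)
  then show ?thesis using k1 by simp
qed

lemma tdist_dZ: "tdist x y = dZ (x - y)"
  unfolding tdist_def dZ_def by simp

lemma tdist_nonneg: "0 \<le> tdist x y" using dZ_nonneg tdist_dZ by simp
lemma tdist_half: "tdist x y \<le> 1/2" using dZ_half tdist_dZ by simp
lemma tdist_sym: "tdist x y = tdist y x"
  using dZ_neg[of "x - y"] by (simp add: tdist_dZ)
lemma tdist_tri: "tdist x z \<le> tdist x y + tdist y z"
  using dZ_add[of "x - y" "y - z"] by (simp add: tdist_dZ)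

lemma tdist_dbl: "tdist (dbl y) (dbl z) \<le> 2 * tdist y z"
proof -
  have "dbl y - dbl z = 2 * (y - z) + of_int (\<lfloor>2*z\<rfloor> - \<lfloor>2*y\<rfloor>)"
    unfolding dbl_def frac_def by (simp add: algebra_simps)
  then have "tdist (dbl y) (dbl z) = dZ (2 * (y - z) + of_int (\<lfloor>2*z\<rfloor> - \<lfloor>2*y\<rfloor>))"
    by (simp only: tdist_dZ)
  also have "\<dots> = dZ (2 * (y - z))" by (rule dZ_shift)
  also have "\<dots> \<le> 2 * dZ (y - z)" by (rule dZ_double)
  finally show ?thesis by (simp add: tdist_dZ)
qed

lemma tdist_dblpow: "tdist ((dbl^^s) y) ((dbl^^s) z) \<le> 2^s * tdist y z"
proof (induction s)
  case 0 then show ?case by simp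
next
  case (Suc s)
  have "tdist ((dbl^^Suc s) y) ((dbl^^Suc s) z) \<le> 2 * tdist ((dbl^^s) y) ((dbl^^s) z)"
    by (simp add: tdist_dbl)
  also have "\<dots> \<le> 2 * (2^s * tdist y z)" using Suc by simp
  finally show ?case by simp
qed

lemma eK: "\<bar>tdist ((dbl^^(i+s)) x) x - tdist ((dbl^^s) x) x\<bar> \<le> 2^s * tdist ((dbl^^i) x) x"
proof -
  have eq: "(dbl^^(i+s)) x = (dbl^^s) ((dbl^^i) x)" by (metis add.commute comp_apply funpow_add)
  have L: "tdist ((dbl^^s) ((dbl^^i) x)) ((dbl^^s) x) \<le> 2^s * tdist ((dbl^^i) x) x"
    by (rule tdist_dblpow)
  have a: "tdist ((dbl^^(i+s)) x) x \<le> tdist ((dbl^^s) ((dbl^^i) x)) ((dbl^^s) x) + tdist ((dbl^^s) x) x"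
    unfolding eq by (rule tdist_tri)
  have b: "tdist ((dbl^^s) x) x \<le> tdist ((dbl^^s) x) ((dbl^^s) ((dbl^^i) x)) + tdist ((dbl^^s) ((dbl^^i) x)) x"
    by (rule tdist_tri)
  show ?thesis using a b L eq tdist_sym[of "(dbl^^s) x" "(dbl^^s) ((dbl^^i) x)"] by (simp add: abs_le_iff)
qed

lemma tdist_zero: assumes "0 \<le> x" "x < 1" "0 \<le> y" "y < 1" "tdist y x = 0" shows "y = x"
proof -
  have "frac (y - x) = 0" using assms(5) frac_lt_1[of "y - x"] unfolding tdist_def by (auto simp: min_def split: if_splits)
  then have "y - x \<in> \<int>" by (simp add: frac_eq_0_iff)
  then obtain k where k: "y - x = of_int k" by (auto elim: Ints_cases)
  have "\<bar>of_int k\<bar> < (1::real)" using k assms(1-4) by auto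
  then have "k = 0" by linarith
  then show ?thesis using k by simp
qed

lemma dbl_range: "0 \<le> dbl y" "dbl y < 1" unfolding dbl_def by (simp_all add: frac_lt_1)



lemma pow2_eq_g: "(2::real) powr (- real k) = 1 / 2^k"
  by (simp add: powr_minus_divide powr_realpow)

lemma inv_pow_mono: "a \<le> b \<Longrightarrow> 1 / 2^b \<le> (1::real) / 2^a"
  by (simp add: frac_le power_increasing)

lemma Y_bound:
  assumes xt: "x \<in> torus" and xY: "x \<notin> Y_inf"
  shows "\<exists>C::nat. \<forall>w\<ge>1. 1/2^(C*w) \<le> tdist ((dbl^^w) x) x"
proof -
  define e where "e t = tdist ((dbl^^t) x) x" for t
  define G where "G n = ereal (1 / real n) * elog2 (e n)" for n
  have L: "liminf G \<noteq> -\<infinity>" using xt xY unfolding Y_inf_def G_def e_def by auto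
  have "-\<infinity> < liminf G" using L by (cases "liminf G") auto
  then obtain y where y: "ereal y < liminf G" using ereal_dense2 by blast
  have "eventually (\<lambda>n. ereal y < G n) sequentially" using less_LiminfD[OF y] .
  then obtain n0 where n0: "\<And>n. n0 \<le> n \<Longrightarrow> ereal y < G n" by (auto simp: eventually_sequentially)
  define n1 where "n1 = max n0 1"
  have pos_big: "0 < e n" if "n1 \<le> n" for n
  proof (rule ccontr)
    assume "\<not> 0 < e n"
    then have "e n = 0" using tdist_nonneg[of "(dbl^^n) x" x] unfolding e_def by linarith
    moreover have "0 < 1 / real n" using that unfolding n1_def by simp
    ultimately have "G n = -\<infinity>" unfolding G_def elog2_def by simp
    then show False using n0[of n] that unfolding n1_def by simp
  qed
  define C0 where "C0 = nat \<lceil>- y\<rceil>"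
  have big_bound: "1/2^(C0*n) \<le> e n" if n: "n1 \<le> n" for n
  proof -
    have ep: "0 < e n" by (rule pos_big[OF n])
    have n1: "(1::real) \<le> real n" using n unfolding n1_def by simp
    have "G n = ereal (log 2 (e n) / real n)" unfolding G_def elog2_def using ep by simp
    then have "y < log 2 (e n) / real n" using n0[of n] n unfolding n1_def by simp
    then have "y * real n < log 2 (e n)" using n1 by (simp add: less_divide_eq)
    moreover have "- real C0 \<le> y" unfolding C0_def by linarith
    then have "- real C0 * real n \<le> y * real n" using n1 by (intro mult_right_mono) auto
    ultimately have "- real (C0*n) \<le> log 2 (e n)" by simp
    then have "(2::real) powr (- real (C0*n)) \<le> e n" using le_log_iff[of 2 "e n"] ep by simp
    moreover have "(2::real) powr (- real (C0*n)) = 1 / 2^(C0*n)"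
      by (rule pow2_eq_g)
    ultimately show ?thesis by linarith
  qed
  have xr: "0 \<le> x" "x < 1" using xt unfolding torus_def by auto
  have pos_all: "0 < e p" if p: "1 \<le> p" for p
  proof (rule ccontr)
    assume "\<not> 0 < e p"
    then have e0: "e p = 0" using tdist_nonneg[of "(dbl^^p) x" x] unfolding e_def by linarith
    have "(dbl^^p) x = dbl ((dbl^^(p-1)) x)" using p by (metis Suc_diff_1 funpow.simps(2) o_apply less_le_trans zero_less_one)
    then have r: "0 \<le> (dbl^^p) x" "(dbl^^p) x < 1" using dbl_range by auto
    have per: "(dbl^^p) x = x" using tdist_zero[OF xr r] e0 unfolding e_def by simp
    have perk: "(dbl^^(p*k)) x = x" for k
    proof (induction k)
      case 0 then show ?case by simp
    next
      case (Suc k)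
      have "(dbl^^(p*Suc k)) x = (dbl^^p) ((dbl^^(p*k)) x)"
        by (metis funpow_add mult_Suc_right o_apply)
      then show ?case using Suc per by simp
    qed
    have "e (p*n1) = 0" unfolding e_def using perk[of n1] by (simp add: tdist_dZ dZ_def)
    moreover have "n1 \<le> p * n1" using p by simp
    ultimately show False using pos_big[of "p*n1"] by simp
  qed
  have small: "\<exists>c. 1/2^(c*w) \<le> e w" if w: "1 \<le> w" for w
  proof -
    obtain k where k: "(1/2::real)^k < e w" using real_arch_pow_inv[of "e w" "1/2"] pos_all[OF w] by auto
    have "1/2^(k*w) \<le> (1::real)/2^k" using w by (intro inv_pow_mono) simp
    also have "\<dots> = (1/2)^k" by (simp add: power_one_over)
    finally show ?thesis using k by (intro exI[of _ k]) simp
  qed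
  define cf where "cf w = (SOME c. 1/2^(c*w) \<le> e w)" for w
  have cf: "1/2^(cf w * w) \<le> e w" if "1 \<le> w" for w
    unfolding cf_def using someI_ex[OF small[OF that]] .
  define C where "C = C0 + (\<Sum>w<n1. cf w)"
  have "\<forall>w\<ge>1. 1/2^(C*w) \<le> e w"
  proof (intro allI impI)
    fix w :: nat assume w: "1 \<le> w"
    show "1/2^(C*w) \<le> e w"
    proof (cases "n1 \<le> w")
      case True
      have "1/2^(C*w) \<le> (1::real)/2^(C0*w)" unfolding C_def by (intro inv_pow_mono) (simp add: algebra_simps)
      then show ?thesis using big_bound[OF True] by linarith
    next
      case False
      have "cf w \<le> (\<Sum>w<n1. cf w)" using False by (intro member_le_sum) auto
      then have "cf w \<le> C" unfolding C_def by simp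
      then have "1/2^(C*w) \<le> (1::real)/2^(cf w * w)" by (intro inv_pow_mono) simp
      then show ?thesis using cf[OF w] by linarith
    qed
  qed
  then show ?thesis unfolding e_def by blast
qed

lemma X_bound:
  assumes pos: "\<forall>i\<ge>1. 0 < tdist ((dbl^^i) x) x"
    and bnd: "\<forall>n\<ge>1. (\<Sum>i=1..n. - log 2 (tdist ((dbl^^i) x) x)) \<le> L * real n"
    and L0: "0 \<le> L"
  shows "x \<notin> X_inf"
proof
  assume "x \<in> X_inf"
  define e where "e t = tdist ((dbl^^t) x) x" for t
  define G where "G n = ereal (1 / real n) * (\<Sum>i=1..n. elog2 (e i))" for n
  have lim: "liminf G = -\<infinity>" using \<open>x \<in> X_inf\<close> unfolding X_inf_def G_def e_def by auto
  have lb: "ereal (- L) \<le> G n" for n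
  proof (cases "n = 0")
    case True then show ?thesis unfolding G_def using L0 by (simp add: zero_ereal_def)
  next
    case False
    have s: "(\<Sum>i=1..n. elog2 (e i)) = ereal (\<Sum>i=1..n. log 2 (e i))"
    proof -
      have "(\<Sum>i=1..n. elog2 (e i)) = (\<Sum>i=1..n. ereal (log 2 (e i)))"
        by (rule sum.cong) (use pos in \<open>auto simp: elog2_def e_def\<close>)
      then show ?thesis by simp
    qed
    have n1: "(0::real) < real n" using False by simp
    have b: "- (\<Sum>i=1..n. log 2 (e i)) \<le> L * real n"
      using bnd False unfolding e_def by (simp add: sum_negf)
    have "- L \<le> (\<Sum>i=1..n. log 2 (e i)) / real n"
      using b n1 by (simp add: le_divide_eq)
    then show ?thesis unfolding G_def s by simp
  qed
  have "ereal (- L) \<le> liminf G" by (rule Liminf_bounded) (use lb in auto)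
  then show False using lim by simp
qed

theorem proposition4p7:
  fixes eps :: real
  assumes "eps > 0"
  shows "X_inf - Y_inf \<subseteq> Z eps"
proof
  fix x assume x: "x \<in> X_inf - Y_inf"
  have xt: "x \<in> torus" using x unfolding X_inf_def by auto
  define e where "e t = tdist ((dbl^^t) x) x" for t
  obtain C where lowb: "\<forall>w\<ge>1. 1/2^(C*w) \<le> e w" using Y_bound[OF xt] x unfolding e_def by auto
  define q where "q = nat \<lceil>1/eps\<rceil>"
  have ep: "0 < 1/eps" using assms by simp
  have q1: "1 \<le> q" unfolding q_def using ep by linarith
  have qe: "1 / real q \<le> eps"
  proof -
    have "1/eps \<le> real q" unfolding q_def by linarith
    then show ?thesis using assms ep by (simp add: divide_le_eq field_simps)
  qed
  show "x \<in> Z eps"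
  proof (rule ccontr)
    assume nZ: "x \<notin> Z eps"
    then obtain N where N1: "1 \<le> N" and
      noQ: "x \<notin> (\<Union>n\<in>{N..}. \<Union>m\<in>{1..}. \<Union>(is, js)\<in>Fnm n m eps. Qhat_multi is js)"
      unfolding Z_def by auto
    interpret chs e C q N
    proof unfold_locales
      show "\<And>t. 0 \<le> e t" unfolding e_def by (rule tdist_nonneg)
      show "\<And>t. e t \<le> 1/2" unfolding e_def by (rule tdist_half)
      show "\<And>i s. \<bar>e (i+s) - e s\<bar> \<le> 2^s * e i" unfolding e_def by (rule eK)
      show "\<And>w. 1 \<le> w \<Longrightarrow> 1 / 2^(C*w) \<le> e w" using lowb by auto
      show "1 \<le> q" by (rule q1)
    qed
    have failc: "n < q * (R + 1)" if a: "N \<le> n" "\<forall>r<R. 2 \<le> (f ^^ r) n" "q * (f ^^ R) n \<le> n" for n R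
    proof (rule ccontr)
      assume a4: "\<not> n < q * (R + 1)"
      have n1: "1 \<le> n" using N1 a by auto
      obtain p where p: "p \<in> Fnm n 1 eps" "x \<in> Qhat_multi (fst p) (snd p)"
        using chain_mem[OF xt _ qe n1 a(2) a(3)] a4 unfolding e_def by force
      have "x \<in> (\<Union>n\<in>{N..}. \<Union>m\<in>{1..}. \<Union>(is, js)\<in>Fnm n m eps. Qhat_multi is js)"
        using p a(1) by (cases p) force
      then show False using noQ by blast
    qed
    interpret chf e C q N by unfold_locales (rule failc)
    have bnd: "\<forall>n\<ge>1. (\<Sum>i=1..n. - log 2 (e i)) \<le> real (1 + K*(C+1)) * real n"
    proof (intro allI impI)
      fix n :: nat assume "1 \<le> n"
      have "(\<Sum>i=1..n. - log 2 (e i)) \<le> real n + real (W ((C+1)*n))" by (rule sum_log_le)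
      also have "W ((C+1)*n) \<le> K * ((C+1)*n)" by (rule W_lin)
      finally show "(\<Sum>i=1..n. - log 2 (e i)) \<le> real (1 + K*(C+1)) * real n"
        by (simp add: algebra_simps)
    qed
    have "x \<notin> X_inf"
      by (rule X_bound) (use bnd e_pos in \<open>auto simp: e_def\<close>)
    then show False using x by simp
  qed
qed

end
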